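(* Let $n\ge2$, $\beta_n=2^{1/(n-1)}$, and $p\in(0,1/2)$ with $p\ge\frac{\beta_n-1}{2\beta_n-1}$. Let $X_1,\dots,X_n$ be i.i.d. with $P(X_i=1)=P(X_i=-1)=p$, $P(X_i=0)=1-2p$. Then the optimal probability, over stopping times $\tau\in\{1,\dots,n\}$ with respect to the natural filtration, that either $X_\tau=1$ and $X_i\ne1$ for all $i>\tau$, or $X_\tau=-1$ and $X_i\ne-1$ for all $i>\tau$, is at least $2(2\beta_n-1)^{1-n}\ge 1/2$. *)

theory Defs
  imports Complex_Main "HOL-Library.FuncSet"
begin

text \<open>Discrete model of n i.i.d. variables X_1..X_n with values in {-1,0,1}:
 an outcome is a function x : nat => int, x i = X_i for i in {1..n}, extensional
 (x i = undefined) outside {1..n}.\<close>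

definition outcomes :: "nat \<Rightarrow> (nat \<Rightarrow> int) set" where
  "outcomes n = PiE {1..n} (\<lambda>_. {-1, 0, 1})"

definition single_prob :: "real \<Rightarrow> int \<Rightarrow> real" where
  "single_prob p v = (if v = 1 \<or> v = -1 then p else if v = 0 then 1 - 2 * p else 0)"

definition outcome_prob :: "nat \<Rightarrow> real \<Rightarrow> (nat \<Rightarrow> int) \<Rightarrow> real" where
  "outcome_prob n p x = (\<Prod>i\<in>{1..n}. single_prob p (x i))"

definition stopping_time :: "nat \<Rightarrow> ((nat \<Rightarrow> int) \<Rightarrow> nat) \<Rightarrow> bool" where
  "stopping_time n \<tau> \<longleftrightarrow>
     (\<forall>x\<in>outcomes n. \<tau> x \<in> {1..n}) \<and>
     (\<forall>x\<in>outcomes n. \<forall>y\<in>outcomes n. \<forall>k.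
        (\<forall>i\<in>{1..k}. x i = y i) \<longrightarrow> (\<tau> x = k \<longleftrightarrow> \<tau> y = k))"

definition success :: "nat \<Rightarrow> ((nat \<Rightarrow> int) \<Rightarrow> nat) \<Rightarrow> (nat \<Rightarrow> int) \<Rightarrow> bool" where
  "success n \<tau> x \<longleftrightarrow>
     (x (\<tau> x) = 1 \<and> (\<forall>i\<in>{\<tau> x<..n}. x i \<noteq> 1)) \<or>
     (x (\<tau> x) = -1 \<and> (\<forall>i\<in>{\<tau> x<..n}. x i \<noteq> -1))"

definition success_prob :: "nat \<Rightarrow> real \<Rightarrow> ((nat \<Rightarrow> int) \<Rightarrow> nat) \<Rightarrow> real" where
  "success_prob n p \<tau> = (\<Sum>x\<in>{x\<in>outcomes n. success n \<tau> x}. outcome_prob n p x)"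

definition optimal_success_prob :: "nat \<Rightarrow> real \<Rightarrow> real" where
  "optimal_success_prob n p = (SUP \<tau>\<in>{\<tau>. stopping_time n \<tau>}. success_prob n p \<tau>)"

end

theory Submission
  imports Defs
begin


lemma xlnx: "0 < (q::real) \<Longrightarrow> q * ln q \<ge> q - 1"
proof -
  assume q: "0 < q"
  have "ln (1/q) \<le> 1/q - 1" using ln_le_minus_one[of "1/q"] q by simp
  hence "- ln q \<le> 1/q - 1" using q by (simp add: ln_div)
  hence "q * (- ln q) \<le> q * (1/q - 1)" using q by (intro mult_left_mono) auto
  thus ?thesis using q by (simp add: algebra_simps)
qed

lemma phi_mono:
  fixes a b :: real
  assumes "0 < a" "a \<le> b" "b < 1"
  shows "ln (2-a) / (- ln a) \<le> ln (2-b) / (- ln b)"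
proof (rule DERIV_nonneg_imp_nondecreasing[OF assms(2)])
  fix x assume x: "a \<le> x" "x \<le> b"
  hence x0: "0 < x" "x < 1" using assms by auto
  have lnx: "ln x < 0" using x0 by simp
  let ?d = "((-1/(2-x)) * (- ln x) - ln (2-x) * (- (1/x))) / (- ln x)^2"
  have "DERIV (\<lambda>q. ln (2-q) / (- ln q)) x :> ?d"
    using x0 lnx
    by (auto intro!: derivative_eq_intros simp: power2_eq_square field_simps)
  moreover have "?d \<ge> 0"
  proof -
    have k: "x * ln x + (2-x) * ln (2-x) \<ge> 0"
      using xlnx[of x] xlnx[of "2-x"] x0 by linarith
    have "(-1/(2-x)) * (- ln x) - ln (2-x) * (- (1/x)) = (x * ln x + (2-x) * ln (2-x)) / (x*(2-x))"
      using x0 by (simp add: field_simps)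
    also have "\<dots> \<ge> 0" using k x0 by simp
    finally show ?thesis by simp
  qed
  ultimately show "\<exists>y. DERIV (\<lambda>q. ln (2-q) / (- ln q)) x :> y \<and> y \<ge> 0" by blast
qed

lemma h_mono:
  fixes w u :: real and k :: nat
  assumes "0 < w" "w \<le> u" "u < 1" "w ^ k \<ge> 1/2"
  shows "(1 - u^Suc k) / (2-u)^Suc k \<le> (1 - w^Suc k) / (2-w)^Suc k"
proof (rule DERIV_nonpos_imp_nonincreasing[OF assms(2)])
  fix x assume x: "w \<le> x" "x \<le> u"
  hence x0: "0 < x" "x < 1" using assms by auto
  have xk: "x^k \<ge> 1/2" using assms(4) power_mono[OF x(1), of k] assms(1) by linarith
  let ?d = "((- (real (Suc k) * x^k)) * (2-x)^Suc k - (real (Suc k) * (2-x)^k * (-1)) * (1 - x^Suc k)) / ((2-x)^Suc k)^Suc (Suc 0)"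
  have "DERIV (\<lambda>q. (1 - q^Suc k) / (2-q)^Suc k) x :> ?d"
  proof -
    have "DERIV (\<lambda>q. q^Suc k) x :> (1 + of_nat k) * (1 * x^k)"
      by (rule DERIV_power_Suc) (rule DERIV_ident)
    hence d1: "DERIV (\<lambda>q. 1 - q^Suc k) x :> - (real (Suc k) * x^k)"
      using DERIV_diff[OF DERIV_const[of 1 "at x"]] by fastforce
    have "DERIV (\<lambda>q. (2-q)^Suc k) x :> (1 + of_nat k) * ((-1) * (2-x)^k)"
      by (rule DERIV_power_Suc) (auto intro!: derivative_eq_intros)
    hence d2: "DERIV (\<lambda>q. (2-q)^Suc k) x :> real (Suc k) * (2-x)^k * (-1)"
      by (simp add: algebra_simps)
    show ?thesis by (rule DERIV_quotient[OF d1 d2]) (use x0 in simp)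
  qed
  moreover have "?d \<le> 0"
  proof -
    have "(- (real (Suc k) * x^k)) * (2-x)^Suc k - (real (Suc k) * (2-x)^k * (-1)) * (1 - x^Suc k)
        = real (Suc k) * (2-x)^k * (1 - 2 * x^k)"
      by (simp add: algebra_simps)
    also have "\<dots> \<le> 0" using xk x0 by (intro mult_nonneg_nonpos) auto
    finally show ?thesis using x0 by (intro divide_nonpos_nonneg) auto
  qed
  ultimately show "\<exists>y. DERIV (\<lambda>q. (1 - q^Suc k) / (2-q)^Suc k) x :> y \<and> y \<le> 0" by blast
qed

lemma Gmono:
  fixes w v :: real and j N :: nat
  assumes "0 < w" "w \<le> v" "v < 1" "w ^ j = 1/2" "v ^ N = 1/2"
  shows "(2-w)^j \<le> (2-v)^N"
proof -
  have lw: "real j * ln w = - ln 2" using arg_cong[OF assms(4), of ln] assms(1)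
    by (simp add: ln_realpow ln_div)
  have lv: "real N * ln v = - ln 2" using arg_cong[OF assms(5), of ln] assms(1,2)
    by (simp add: ln_realpow ln_div)
  have w1: "w < 1" using assms by auto
  have lnw: "ln w < 0" "ln v < 0" using assms w1 by auto
  have j: "real j = ln 2 / (- ln w)" using lw lnw by (simp add: field_simps)
  have N: "real N = ln 2 / (- ln v)" using lv lnw by (simp add: field_simps)
  have "real j * ln (2-w) = ln 2 * (ln (2-w) / (- ln w))" using j by simp
  also have "\<dots> \<le> ln 2 * (ln (2-v) / (- ln v))"
    using phi_mono[OF assms(1,2,3)] by (intro mult_left_mono) auto
  also have "\<dots> = real N * ln (2-v)" using N by simp
  finally have "ln ((2-w)^j) \<le> ln ((2-v)^N)" using assms w1 by (simp add: ln_realpow)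
  thus ?thesis using assms w1 by simp
qed

lemma key:
  fixes u v :: real and N :: nat
  assumes "N \<ge> 1" "0 < v" "v < 1" "v ^ N = 1/2" "0 < u" "u \<le> v"
  shows "\<exists>m\<in>{1..N}. 1/(2-v)^N \<le> 2 * ((1 - u^m) / (2-u)^m)"
proof -
  have uN: "u ^ N \<le> 1/2" using power_mono[OF assms(6), of N] assms by simp
  define m where "m = (LEAST m. u ^ m \<le> 1/2)"
  have um: "u ^ m \<le> 1/2" unfolding m_def by (rule LeastI[of _ N]) (rule uN)
  have mN: "m \<le> N" unfolding m_def by (rule Least_le) (rule uN)
  have m1: "m \<ge> 1" using um by (cases m) auto
  obtain k where mk: "m = Suc k" using m1 by (cases m) auto
  have uk: "u ^ k \<ge> 1/2"
  proof (rule ccontr)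
    assume "\<not> ?thesis"
    hence "m \<le> k" unfolding m_def by (intro Least_le) auto
    thus False using mk by simp
  qed
  define w where "w = root m (1/2)"
  have wm: "w ^ m = 1/2" unfolding w_def using m1 by simp
  have w0: "0 < w" unfolding w_def using m1 by simp
  have uw: "u \<le> w"
    using um wm w0 assms(5) unfolding mk by (intro power_le_imp_le_base[of u k w]) auto
  have w1: "w < 1"
  proof (rule ccontr)
    assume "\<not> w < 1" hence "1 \<le> w ^ m" using one_le_power by fastforce
    thus False using wm by simp
  qed
  have wv: "w \<le> v"
  proof -
    have "v ^ N \<le> v ^ m" using mN assms by (intro power_decreasing) auto
    thus ?thesis using wm assms w0 unfolding mk by (intro power_le_imp_le_base[of w k v]) auto
  qed
  have "(1 - w^Suc k) / (2-w)^Suc k \<le> (1 - u^Suc k) / (2-u)^Suc k"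
    using uw w1 uk assms(5) by (intro h_mono) auto
  moreover have e: "1 - w^Suc k = 1/2" using wm mk by simp
  ultimately have h: "(1/2) / (2-w)^m \<le> (1 - u^m) / (2-u)^m" unfolding mk by (simp only: e)
  have G: "(2-w)^m \<le> (2-v)^N" by (rule Gmono[OF w0 wv assms(3) wm assms(4)])
  have "1/(2-v)^N \<le> 1/(2-w)^m" using G w1 wv assms(3) by (intro divide_left_mono) auto
  also have "\<dots> = 2 * ((1/2) / (2-w)^m)" by simp
  also have "\<dots> \<le> 2 * ((1 - u^m) / (2-u)^m)" using h by (intro mult_left_mono) auto
  finally show ?thesis using m1 mN by auto
qed



definition thr :: "nat \<Rightarrow> nat \<Rightarrow> (nat \<Rightarrow> int) \<Rightarrow> nat" where
  "thr n s x = (if \<exists>j. s \<le> j \<and> j \<le> n \<and> x j \<noteq> 0 then (LEAST j. s \<le> j \<and> x j \<noteq> 0) else n)"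

lemma thr_char:
  fixes k :: nat and x :: "nat \<Rightarrow> int"
  shows "thr n s x = k \<longleftrightarrow> (s \<le> k \<and> k \<le> n \<and> x k \<noteq> 0 \<and> (\<forall>j. s \<le> j \<longrightarrow> j < k \<longrightarrow> x j = 0))
      \<or> (k = n \<and> (\<forall>j. s \<le> j \<longrightarrow> j \<le> n \<longrightarrow> x j = 0))"
proof (cases "\<exists>j. s \<le> j \<and> j \<le> n \<and> x j \<noteq> 0")
  case True
  then obtain j0 where j0: "s \<le> j0" "j0 \<le> n" "x j0 \<noteq> 0" by blast
  define L where "L = (LEAST j. s \<le> j \<and> x j \<noteq> 0)"
  have L: "s \<le> L \<and> x L \<noteq> 0" unfolding L_def by (rule LeastI[of _ j0]) (use j0 in auto)
  have Lj0: "L \<le> j0" unfolding L_def by (rule Least_le) (use j0 in auto)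
  have Lmin: "\<And>j. s \<le> j \<Longrightarrow> j < L \<Longrightarrow> x j = 0"
    unfolding L_def using not_less_Least by blast
  have t: "thr n s x = L" using True unfolding thr_def L_def by simp
  show ?thesis
  proof
    assume "thr n s x = k"
    thus "(s \<le> k \<and> k \<le> n \<and> x k \<noteq> 0 \<and> (\<forall>j. s \<le> j \<longrightarrow> j < k \<longrightarrow> x j = 0))
      \<or> (k = n \<and> (\<forall>j. s \<le> j \<longrightarrow> j \<le> n \<longrightarrow> x j = 0))"
      using t L Lj0 j0 Lmin by auto
  next
    assume A: "(s \<le> k \<and> k \<le> n \<and> x k \<noteq> 0 \<and> (\<forall>j. s \<le> j \<longrightarrow> j < k \<longrightarrow> x j = 0))
      \<or> (k = n \<and> (\<forall>j. s \<le> j \<longrightarrow> j \<le> n \<longrightarrow> x j = 0))"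
    show "thr n s x = k"
    proof -
      have "\<not> (k = n \<and> (\<forall>j. s \<le> j \<longrightarrow> j \<le> n \<longrightarrow> x j = 0))" using j0 by auto
      hence k: "s \<le> k" "x k \<noteq> 0" "\<forall>j. s \<le> j \<longrightarrow> j < k \<longrightarrow> x j = 0" using A by auto
      have "\<not> k < L" using Lmin k by auto
      moreover have "\<not> L < k" using k L by auto
      ultimately show ?thesis using t by simp
    qed
  qed
next
  case False
  hence t: "thr n s x = n" unfolding thr_def by (rule if_not_P)
  show ?thesis using False t by auto
qed

lemma thr_stop:
  assumes "1 \<le> s" "s \<le> n"
  shows "stopping_time n (thr n s)"
  unfolding stopping_time_def
proof (intro conjI ballI allI impI)
  fix x assume "x \<in> outcomes n"
  have "thr n s x = thr n s x" by simp
  hence "(s \<le> thr n s x \<and> thr n s x \<le> n) \<or> thr n s x = n" unfolding thr_char[of n s x "thr n s x"] by blast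
  thus "thr n s x \<in> {1..n}" using assms by auto
next
  fix x y :: "nat \<Rightarrow> int" and k :: nat assume agree: "\<forall>i\<in>{1..k}. x i = y i"
  have e: "\<And>j. s \<le> j \<Longrightarrow> j \<le> k \<Longrightarrow> x j = y j" using agree assms by auto
  have "((s \<le> k \<and> k \<le> n \<and> x k \<noteq> 0 \<and> (\<forall>j. s \<le> j \<longrightarrow> j < k \<longrightarrow> x j = 0))
      \<or> (k = n \<and> (\<forall>j. s \<le> j \<longrightarrow> j \<le> n \<longrightarrow> x j = 0))) \<longleftrightarrow>
      ((s \<le> k \<and> k \<le> n \<and> y k \<noteq> 0 \<and> (\<forall>j. s \<le> j \<longrightarrow> j < k \<longrightarrow> y j = 0))
      \<or> (k = n \<and> (\<forall>j. s \<le> j \<longrightarrow> j \<le> n \<longrightarrow> y j = 0)))"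
    using e by (metis less_imp_le order_refl)
  thus "thr n s x = k \<longleftrightarrow> thr n s y = k" unfolding thr_char .
qed

definition blk :: "nat \<Rightarrow> nat \<Rightarrow> int \<Rightarrow> nat \<Rightarrow> int set" where
  "blk s k \<sigma> i = (if i < s then {-1,0,1} else if i < k then {0} else if i = k then {\<sigma>} else {-1,0,1} - {\<sigma>})"

lemma blk_sum:
  assumes "\<sigma> \<in> {1,-1}"
  shows "(\<Sum>a\<in>blk s k \<sigma> i. single_prob p a) =
     (if i < s then 1 else if i < k then 1 - 2*p else if i = k then p else 1 - p)"
  using assms by (auto simp: blk_def single_prob_def insert_Diff_if)

lemma prod_blk:
  assumes "1 \<le> s" "s \<le> k" "k \<le> n" "\<sigma> \<in> {1,-1}"
  shows "(\<Sum>x\<in>PiE {1..n} (blk s k \<sigma>). outcome_prob n p x) = (1-2*p)^(k-s) * p * (1-p)^(n-k)"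
proof -
  define g where "g i = (if i < s then 1 else if i < k then 1 - 2*p else if i = k then p else 1 - (p::real))" for i
  have "(\<Sum>x\<in>PiE {1..n} (blk s k \<sigma>). outcome_prob n p x) = (\<Prod>i\<in>{1..n}. \<Sum>a\<in>blk s k \<sigma> i. single_prob p a)"
    unfolding outcome_prob_def by (rule prod_sum_PiE[symmetric]) (auto simp: blk_def)
  also have "\<dots> = prod g {1..<Suc n}" using blk_sum[OF assms(4)] unfolding g_def
    by (intro prod.cong) auto
  also have "\<dots> = prod g {1..<s} * prod g {s..<k} * prod g {k..<Suc n}"
    using assms by (simp add: prod.atLeastLessThan_concat)
  also have "prod g {1..<s} = 1" unfolding g_def by (intro prod.neutral) auto
  also have "prod g {s..<k} = prod (\<lambda>_. 1-2*p) {s..<k}"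
    by (rule prod.cong) (auto simp: g_def)
  also have "\<dots> = (1-2*p)^(k-s)" by simp
  also have "prod g {k..<Suc n} = g k * prod g {Suc k..<Suc n}"
    by (rule prod.atLeast_Suc_lessThan) (use assms in simp)
  also have "g k = p" using assms by (simp add: g_def)
  also have "prod g {Suc k..<Suc n} = prod (\<lambda>_. 1-p) {Suc k..<Suc n}"
    by (rule prod.cong) (use assms in \<open>auto simp: g_def\<close>)
  also have "\<dots> = (1-p)^(n-k)" by simp
  finally show ?thesis by simp
qed

lemma outcome_prob_nonneg:
  assumes "0 \<le> p" "p \<le> 1/2"
  shows "0 \<le> outcome_prob n p x"
  unfolding outcome_prob_def single_prob_def using assms by (intro prod_nonneg) auto

lemma blk_mem:
  assumes "x \<in> PiE {1..n} (blk s k \<sigma>)" "i \<in> {1..n}"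
  shows "x i \<in> blk s k \<sigma> i"
  using assms by (auto simp: PiE_iff)

lemma blk_success:
  assumes "1 \<le> s" "s \<le> k" "k \<le> n" "\<sigma> \<in> {1,-1}" "x \<in> PiE {1..n} (blk s k \<sigma>)"
  shows "x \<in> outcomes n \<and> success n (thr n s) x"
proof
  have "PiE {1..n} (blk s k \<sigma>) \<subseteq> PiE {1..n} (\<lambda>_. {-1,0,1})"
    using assms(4) by (intro PiE_mono) (auto simp: blk_def)
  thus "x \<in> outcomes n" using assms(5) unfolding outcomes_def by blast
  have xk: "x k = \<sigma>" using blk_mem[OF assms(5), of k] assms by (auto simp: blk_def)
  have z: "\<forall>j. s \<le> j \<longrightarrow> j < k \<longrightarrow> x j = 0"
  proof (intro allI impI)
    fix j assume j: "s \<le> j" "j < k"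
    have "x j \<in> blk s k \<sigma> j" by (rule blk_mem[OF assms(5)]) (use j assms in auto)
    thus "x j = 0" using j by (simp add: blk_def)
  qed
  have t: "thr n s x = k" unfolding thr_char using assms xk z by auto
  have r: "\<forall>i\<in>{k<..n}. x i \<noteq> \<sigma>"
  proof
    fix i assume i: "i \<in> {k<..n}"
    have "x i \<in> blk s k \<sigma> i" by (rule blk_mem[OF assms(5)]) (use i assms in auto)
    thus "x i \<noteq> \<sigma>" using i assms by (simp add: blk_def)
  qed
  show "success n (thr n s) x" unfolding success_def t using xk r assms(4) by auto
qed

lemma succ_bound:
  assumes "1 \<le> s" "s \<le> n" "0 \<le> p" "p \<le> 1/2"
  shows "2*((1-p)^(n-s+1) - (1-2*p)^(n-s+1)) \<le> success_prob n p (thr n s)"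
proof -
  define M where "M = n - s + 1"
  define K where "K = {..<M} \<times> {1,-1::int}"
  define S where "S = (\<lambda>(j,\<sigma>). PiE {1..n} (blk s (s+j) \<sigma>))"
  define E where "E = \<Union>(S ` K)"
  have finK: "finite K" unfolding K_def by auto
  have finS: "\<forall>c\<in>K. finite (S c)" unfolding S_def
    by (auto intro!: finite_PiE simp: blk_def)
  have disj: "\<forall>c\<in>K. \<forall>d\<in>K. c \<noteq> d \<longrightarrow> S c \<inter> S d = {}"
  proof (intro ballI impI)
    fix c d assume c: "c \<in> K" and d: "d \<in> K" and cd: "c \<noteq> d"
    obtain j \<sigma> where cj: "c = (j,\<sigma>)" by fastforce
    obtain j' \<sigma>' where dj: "d = (j',\<sigma>')" by fastforce
    show "S c \<inter> S d = {}"
    proof (rule ccontr)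
      assume "S c \<inter> S d \<noteq> {}"
      then obtain x where x1: "x \<in> PiE {1..n} (blk s (s+j) \<sigma>)" and x2: "x \<in> PiE {1..n} (blk s (s+j') \<sigma>')"
        unfolding S_def cj dj by auto
      have jn: "s + j \<le> n" "s + j' \<le> n" using c d cj dj assms(2) unfolding K_def M_def by auto
      have a1: "x (s+j) \<in> blk s (s+j) \<sigma> (s+j)" "x (s+j') \<in> blk s (s+j') \<sigma>' (s+j')"
        "x (s+j) \<in> blk s (s+j') \<sigma>' (s+j)" "x (s+j') \<in> blk s (s+j) \<sigma> (s+j')"
        using blk_mem[OF x1] blk_mem[OF x2] jn assms by auto
      have sg: "\<sigma> \<noteq> 0" "\<sigma>' \<noteq> 0" using c d cj dj unfolding K_def by auto
      show False
      proof (cases j j' rule: linorder_cases)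
        case less thus False using a1 sg by (auto simp: blk_def)
      next
        case greater thus False using a1 sg by (auto simp: blk_def)
      next
        case equal thus False using a1 cd cj dj by (auto simp: blk_def)
      qed
    qed
  qed
  have ES: "E \<subseteq> {x\<in>outcomes n. success n (thr n s) x}"
  proof
    fix x assume "x \<in> E"
    then obtain j \<sigma> where jK: "(j,\<sigma>) \<in> K" and x: "x \<in> PiE {1..n} (blk s (s+j) \<sigma>)"
      unfolding E_def S_def by auto
    have "s + j \<le> n" "\<sigma> \<in> {1,-1}" using jK assms(2) unfolding K_def M_def by auto
    thus "x \<in> {x\<in>outcomes n. success n (thr n s) x}" using blk_success[OF assms(1) _ _ _ x] by auto
  qed
  have finO: "finite (outcomes n)" unfolding outcomes_def by (auto intro!: finite_PiE)
  have "sum (outcome_prob n p) E \<le> success_prob n p (thr n s)"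
    unfolding success_prob_def
    by (rule sum_mono2) (use finO ES outcome_prob_nonneg[OF assms(3,4)] in auto)
  moreover have "sum (outcome_prob n p) E = (\<Sum>c\<in>K. sum (outcome_prob n p) (S c))"
    unfolding E_def by (rule sum.UNION_disjoint[OF finK finS disj])
  moreover have "\<dots> = (\<Sum>c\<in>K. (case c of (j,\<sigma>) \<Rightarrow> (1-2*p)^j * p * (1-p)^(n-s-j)))"
  proof (rule sum.cong[OF refl])
    fix c assume "c \<in> K"
    then obtain j \<sigma> where c: "c = (j,\<sigma>)" "j < M" "\<sigma> \<in> {1,-1}" unfolding K_def by auto
    have "sum (outcome_prob n p) (S c) = (1-2*p)^(s+j-s) * p * (1-p)^(n-(s+j))"
      unfolding c S_def prod.case using c assms unfolding M_def by (intro prod_blk) auto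
    thus "sum (outcome_prob n p) (S c) = (case c of (j,\<sigma>) \<Rightarrow> (1-2*p)^j * p * (1-p)^(n-s-j))"
      using c by simp
  qed
  moreover have "\<dots> = (\<Sum>j<M. 2 * ((1-2*p)^j * p * (1-p)^(n-s-j)))"
    unfolding K_def sum.cartesian_product' by simp
  moreover have "\<dots> = 2*((1-p)^M - (1-2*p)^M)"
  proof -
    define g where "g j = (1-2*p)^j * (1-p)^(n-s-j)" for j
    have "(1-p)^M - (1-2*p)^M = ((1-p) - (1-2*p)) * (\<Sum>i<M. (1-2*p)^(M - Suc i) * (1-p)^i)"
      by (rule power_diff_sumr2)
    also have "(\<Sum>i<M. (1-2*p)^(M - Suc i) * (1-p)^i) = (\<Sum>i<M. g (M - Suc i))"
    proof (rule sum.cong[OF refl])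
      fix i assume "i \<in> {..<M}"
      hence "M - Suc i = n - s - i" "n - s - (n - s - i) = i" using assms(2) unfolding M_def by auto
      thus "(1-2*p)^(M - Suc i) * (1-p)^i = g (M - Suc i)" unfolding g_def by simp
    qed
    also have "\<dots> = sum g {..<M}" by (rule sum.nat_diff_reindex)
    finally have "(1-p)^M - (1-2*p)^M = p * sum g {..<M}" by simp
    thus ?thesis unfolding g_def by (simp add: sum_distrib_left algebra_simps)
  qed
  ultimately show ?thesis unfolding M_def by simp
qed


theorem mainTheorem10:
  fixes n :: nat and p :: real
  assumes "n \<ge> 2"
    and "0 < p" and "p < 1/2"
    and "p \<ge> (2 powr (1 / real (n - 1)) - 1) / (2 * 2 powr (1 / real (n - 1)) - 1)"
  shows "optimal_success_prob n p \<ge> 2 * (2 * 2 powr (1 / real (n - 1)) - 1) powr (1 - real n)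
       \<and> 2 * (2 * 2 powr (1 / real (n - 1)) - 1) powr (1 - real n) \<ge> 1/2"
proof -
  define N where "N = n - 1"
  define \<beta> where "\<beta> = 2 powr (1 / real N)"
  have N1: "N \<ge> 1" using assms(1) unfolding N_def by simp
  have b1: "\<beta> > 1" unfolding \<beta>_def using N1 by (simp add: powr_gt_zero)
  have bN: "\<beta> ^ N = 2"
  proof -
    have "\<beta> ^ N = \<beta> powr real N" using b1 by (simp add: powr_realpow)
    also have "\<dots> = 2 powr (1 / real N * real N)" unfolding \<beta>_def by (simp add: powr_powr)
    also have "\<dots> = 2" using N1 by simp
    finally show ?thesis .
  qed
  define v where "v = 1 / \<beta>"
  have v0: "0 < v" "v < 1" unfolding v_def using b1 by auto
  have vN: "v ^ N = 1/2" unfolding v_def using bN by (simp add: power_divide)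
  define u where "u = (1-2*p)/(1-p)"
  have u0: "0 < u" unfolding u_def using assms by auto
  have pc: "p * (2*\<beta>-1) \<ge> \<beta> - 1" using assms(4) b1 unfolding \<beta>_def N_def
    by (simp add: pos_divide_le_eq mult.commute)
  have uv: "u \<le> v"
  proof -
    have "\<beta> * (1-2*p) \<le> 1 - p" using pc by (simp add: algebra_simps)
    thus ?thesis unfolding u_def v_def using assms b1 by (simp add: field_simps)
  qed
  obtain m where m: "m \<in> {1..N}" and mb: "1/(2-v)^N \<le> 2 * ((1 - u^m) / (2-u)^m)"
    using key[OF N1 v0 vN u0 uv] by blast
  have hu: "(1 - u^m) / (2-u)^m = (1-p)^m - (1-2*p)^m"
  proof -
    have "2 - u = 1/(1-p)" unfolding u_def using assms by (simp add: field_simps)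
    hence "(1 - u^m) / (2-u)^m = (1 - u^m) * (1-p)^m" by (simp add: power_divide)
    also have "\<dots> = (1-p)^m - (u*(1-p))^m" by (simp only: power_mult_distrib left_diff_distrib mult_1)
    also have "u*(1-p) = 1-2*p" unfolding u_def using assms by simp
    finally show ?thesis .
  qed
  define s where "s = n - m + 1"
  have s: "1 \<le> s" "s \<le> n" "n - s + 1 = m" using m unfolding s_def N_def by auto
  have sp: "2*((1-p)^m - (1-2*p)^m) \<le> success_prob n p (thr n s)"
    using succ_bound[OF s(1,2), of p] assms unfolding s(3) by simp
  have finO: "finite (outcomes n)" unfolding outcomes_def by (auto intro!: finite_PiE)
  have bdd: "bdd_above ((\<lambda>\<tau>. success_prob n p \<tau>) ` {\<tau>. stopping_time n \<tau>})"
  proof (rule bdd_aboveI2)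
    fix \<tau> show "success_prob n p \<tau> \<le> sum (outcome_prob n p) (outcomes n)"
      unfolding success_prob_def
      by (rule sum_mono2) (use finO outcome_prob_nonneg[of p n] assms in auto)
  qed
  have opt: "success_prob n p (thr n s) \<le> optimal_success_prob n p"
    unfolding optimal_success_prob_def
    by (rule cSUP_upper[OF _ bdd]) (use thr_stop[OF s(1,2)] in simp)
  have bt: "2 * (2 * \<beta> - 1) powr (1 - real n) = 1/(2-v)^N"
  proof -
    have e: "1 - real n = - real N" unfolding N_def using assms(1) by simp
    have pos: "2*\<beta> - 1 > 0" using b1 by simp
    have "(2 * \<beta> - 1) powr (1 - real n) = 1 / (2*\<beta>-1)^N"
      unfolding e using pos by (simp add: powr_minus powr_realpow divide_inverse)
    moreover have "2*\<beta> - 1 = (2-v)/v" unfolding v_def using b1 by (simp add: field_simps)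
    ultimately have "(2 * \<beta> - 1) powr (1 - real n) = v^N / (2-v)^N"
      by (simp add: power_divide)
    thus ?thesis using vN by simp
  qed
  have half: "1/2 \<le> 1/(2-v)^N"
  proof -
    have "v * (2-v) \<le> 1" by (simp add: algebra_simps) (metis (no_types) diff_ge_0_iff_ge power2_diff power2_eq_square zero_le_power2 mult_1 add_diff_cancel_left' le_add_diff_inverse mult.commute one_power2)
    hence "(v * (2-v))^N \<le> 1" using v0 by (intro power_le_one) auto
    hence "(2-v)^N \<le> 2" using vN by (simp add: power_mult_distrib)
    moreover have "0 < (2-v)^N" using v0 by simp
    ultimately show ?thesis by (simp add: field_simps)
  qed
  have "2 * (2 * \<beta> - 1) powr (1 - real n) \<le> optimal_success_prob n p"
    using bt mb hu sp opt by simp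
  moreover have "2 * (2 * \<beta> - 1) powr (1 - real n) \<ge> 1/2" using bt half by simp
  ultimately show ?thesis unfolding \<beta>_def N_def by simp
qed

end
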